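(* Let $\mathcal P_1,\dots,\mathcal P_n$ be nonempty sets of probability measures on $(\Omega,\mathcal F)$, $\Lambda_i\in\mathcal H_I$, and suppose $\overline{\mathbb Q}_i=\sup_{\mathbb Q\in\mathcal P_i}\mathbb Q$ (setwise supremum) are continuous capacities. Then for every $X\in\mathcal X$, $$\mathop{\square}_{i=1}^n\sup_{\mathbb Q\in\mathcal P_i}\Lambda_i\mathrm{VaR}^{\mathbb Q}(X)=\inf\{x\in\mathbb R:\{X>x\}\in\mathcal A^{\mathbf\Lambda,(\overline{\mathbb Q}_1,\dots,\overline{\mathbb Q}_n)}_x\},$$ and this functional is of the form $\Lambda\mathrm{VaR}^w$ for some $\Lambda\in\mathcal H_I^*$ and capacity $w$. If the infimum on the right is attained at $x^*$, an optimal allocation is $X_i=(X-x^* )\mathds 1_{A_i^*}+y_i^*$ with $\sum_iy_i^*=x^*$, $(A_i^* )\in\Pi_n(\Omega)$ and $\overline{\mathbb Q}_i(\{X>x^*\}\cap A_i^* )\le\Lambda_i(y_i^* )$.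
   Context: $\mathcal X$: set of real-valued random variables containing constants and closed under sums, differences and multiplication by indicators. Capacity: monotone $w:\mathcal F\to[0,1]$ with $w(\emptyset)=0$, $w(\Omega)=1$; continuous if $w(A_k)\to0$ whenever $A_k\downarrow\emptyset$. $\Lambda\mathrm{VaR}^w(X)=\inf\{x\in\mathbb R:w(X>x)\le\Lambda(x)\}$. $\mathcal H_I$: increasing functions $\mathbb R\to(0,1)$; $\mathcal H_I^*$: increasing functions $\mathbb R\to(0,1]$. $\mathcal A^{\mathbf\Lambda,\mathbf w}_x=\{\bigcup_iA_i: w_i(A_i)\le\Lambda_i(y_i)\ \forall i\text{ for some }(y_i)\text{ with }\sum_iy_i=x\}$. Inf-convolution $\mathop{\square}_i\rho_i(X)=\inf\{\sum_i\rho_i(X_i):X_i\in\mathcal X,\sum_iX_i=X\}$. $\Pi_n(\Omega)$: measurable partitions of $\Omega$ into $n$ sets. *)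

theory Defs
  imports "HOL-Probability.Probability"
begin

definition rv_space :: "'a measure \<Rightarrow> ('a \<Rightarrow> real) set \<Rightarrow> bool" where
  "rv_space M XX \<longleftrightarrow> XX \<subseteq> borel_measurable M
     \<and> (\<forall>c::real. (\<lambda>_. c) \<in> XX)
     \<and> (\<forall>X\<in>XX. \<forall>Y\<in>XX. (\<lambda>\<omega>. X \<omega> + Y \<omega>) \<in> XX \<and> (\<lambda>\<omega>. X \<omega> - Y \<omega>) \<in> XX)
     \<and> (\<forall>X\<in>XX. \<forall>A\<in>sets M. (\<lambda>\<omega>. X \<omega> * indicator A \<omega>) \<in> XX)"

definition capacity :: "'a measure \<Rightarrow> ('a set \<Rightarrow> real) \<Rightarrow> bool" where
  "capacity M w \<longleftrightarrow> (\<forall>A\<in>sets M. 0 \<le> w A \<and> w A \<le> 1)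
     \<and> (\<forall>A\<in>sets M. \<forall>B\<in>sets M. A \<subseteq> B \<longrightarrow> w A \<le> w B)
     \<and> w {} = 0 \<and> w (space M) = 1"

definition continuous_capacity :: "'a measure \<Rightarrow> ('a set \<Rightarrow> real) \<Rightarrow> bool" where
  "continuous_capacity M w \<longleftrightarrow> capacity M w
     \<and> (\<forall>A::nat \<Rightarrow> 'a set. (\<forall>k. A k \<in> sets M) \<longrightarrow> decseq A \<longrightarrow> (\<Inter>k. A k) = {}
            \<longrightarrow> (\<lambda>k. w (A k)) \<longlonglongrightarrow> 0)"

definition HI :: "(real \<Rightarrow> real) \<Rightarrow> bool" where
  "HI L \<longleftrightarrow> mono L \<and> (\<forall>x. 0 < L x \<and> L x < 1)"

definition HI_star :: "(real \<Rightarrow> real) \<Rightarrow> bool" where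
  "HI_star L \<longleftrightarrow> mono L \<and> (\<forall>x. 0 < L x \<and> L x \<le> 1)"

definition LVaR :: "'a measure \<Rightarrow> (real \<Rightarrow> real) \<Rightarrow> ('a set \<Rightarrow> real) \<Rightarrow> ('a \<Rightarrow> real) \<Rightarrow> ereal" where
  "LVaR M L w X = Inf {ereal x | x. w {\<omega>\<in>space M. X \<omega> > x} \<le> L x}"

definition upper_prob :: "'a measure set \<Rightarrow> 'a set \<Rightarrow> real" where
  "upper_prob P A = (SUP Q\<in>P. measure Q A)"

definition inf_conv :: "'a measure \<Rightarrow> ('a \<Rightarrow> real) set \<Rightarrow> nat \<Rightarrow> (nat \<Rightarrow> ('a \<Rightarrow> real) \<Rightarrow> ereal)
    \<Rightarrow> ('a \<Rightarrow> real) \<Rightarrow> ereal" where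
  "inf_conv M XX n \<rho> X = Inf {(\<Sum>i<n. \<rho> i (Xs i)) | Xs.
      (\<forall>i<n. Xs i \<in> XX) \<and> (\<forall>\<omega>\<in>space M. (\<Sum>i<n. Xs i \<omega>) = X \<omega>)}"

definition A_set :: "'a measure \<Rightarrow> nat \<Rightarrow> (nat \<Rightarrow> real \<Rightarrow> real) \<Rightarrow> (nat \<Rightarrow> 'a set \<Rightarrow> real)
    \<Rightarrow> real \<Rightarrow> 'a set set" where
  "A_set M n L w x = {(\<Union>i<n. A i) | A. (\<forall>i<n. A i \<in> sets M) \<and>
      (\<exists>y::nat \<Rightarrow> real. (\<Sum>i<n. y i) = x \<and> (\<forall>i<n. w i (A i) \<le> L i (y i)))}"

definition partition_n :: "'a measure \<Rightarrow> nat \<Rightarrow> (nat \<Rightarrow> 'a set) \<Rightarrow> bool" where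
  "partition_n M n A \<longleftrightarrow> (\<forall>i<n. A i \<in> sets M)
     \<and> (\<forall>i<n. \<forall>j<n. i \<noteq> j \<longrightarrow> A i \<inter> A j = {}) \<and> (\<Union>i<n. A i) = space M"

end

theory Submission
  imports Defs
begin

lemma meas_gt: fixes Z :: "'a \<Rightarrow> real" assumes "Z \<in> borel_measurable M" shows "{\<omega>\<in>space M. c < Z \<omega>} \<in> sets M"
  using assms unfolding borel_measurable_iff_greater by simp

lemma ereal_split:
  fixes x y :: ereal
  assumes "x + y < ereal b" "x < \<infinity>" "y < \<infinity>"
  shows "\<exists>b1 b2. x < ereal b1 \<and> y < ereal b2 \<and> b1 + b2 \<le> b"
proof (cases x)
  case (real a)
  show ?thesis
  proof (cases y)
    case (real d)
    with \<open>x = ereal a\<close> assms show ?thesis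
      by (intro exI[of _ "a + (b-a-d)/2"] exI[of _ "d + (b-a-d)/2"]) auto
  next
    case PInf with assms show ?thesis by simp
  next
    case MInf with \<open>x = ereal a\<close> show ?thesis
      by (intro exI[of _ "a + 1"] exI[of _ "b - a - 1"]) auto
  qed
next
  case PInf with assms show ?thesis by simp
next
  case MInf
  show ?thesis
  proof (cases y)
    case (real d)
    with \<open>x = -\<infinity>\<close> show ?thesis
      by (intro exI[of _ "b - d - 1"] exI[of _ "d + 1"]) auto
  next
    case PInf with assms show ?thesis by simp
  next
    case MInf with \<open>x = -\<infinity>\<close> show ?thesis
      by (intro exI[of _ "b"] exI[of _ "0"]) auto
  qed
qed

lemma ereal_sum_split:
  fixes r :: "nat \<Rightarrow> ereal"
  assumes "finite I" "\<forall>i\<in>I. r i < \<infinity>" "sum r I < ereal b"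
  shows "\<exists>c. (\<forall>i\<in>I. r i < ereal (c i)) \<and> (\<Sum>i\<in>I. c i) < b"
  using assms
proof (induction I arbitrary: b rule: finite_induct)
  case empty
  then show ?case by (simp add: zero_ereal_def)
next
  case (insert j I)
  have "r j + sum r I < ereal b" using insert by simp
  moreover have "sum r I < \<infinity>" using insert by (simp add: sum_Pinfty less_top)
  ultimately obtain b1 b2 where b: "r j < ereal b1" "sum r I < ereal b2" "b1 + b2 \<le> b"
    using ereal_split[of "r j" "sum r I" b] insert.prems by auto
  have "\<forall>i\<in>I. r i < \<infinity>" using insert.prems by simp
  from insert.IH[OF this b(2)] obtain c where c: "\<forall>i\<in>I. r i < ereal (c i)" "(\<Sum>i\<in>I. c i) < b2"
    by blast
  have e: "(\<Sum>i\<in>I. (c(j:=b1)) i) = (\<Sum>i\<in>I. c i)"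
    by (rule sum.cong) (use insert.hyps in auto)
  have "(\<Sum>i\<in>insert j I. (c(j:=b1)) i) = b1 + (\<Sum>i\<in>I. c i)"
    by (subst sum.insert[OF insert.hyps(1,2)]) (simp only: e fun_upd_same)
  moreover have "\<forall>i\<in>insert j I. r i < ereal ((c(j:=b1)) i)" using b c by auto
  ultimately show ?case using b c
    by (intro exI[of _ "c(j:=b1)"]) auto
qed

lemma part_ind:
  assumes "partition_n M n B" "\<omega> \<in> space M"
  shows "(\<Sum>i<n. indicator (B i) \<omega> :: real) = 1"
proof -
  have "\<omega> \<in> (\<Union>i<n. B i)" using assms unfolding partition_n_def by simp
  then obtain j where j: "j < n" "\<omega> \<in> B j" by blast
  have "(\<Sum>i<n. indicator (B i) \<omega> :: real) = indicator (B j) \<omega> + (\<Sum>i\<in>{..<n}-{j}. indicator (B i) \<omega>)"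
    using j by (subst sum.remove[of _ j]) auto
  also have "(\<Sum>i\<in>{..<n}-{j}. indicator (B i) \<omega> :: real) = 0"
  proof (rule sum.neutral, intro ballI)
    fix i assume "i \<in> {..<n} - {j}"
    then have "B i \<inter> B j = {}" using assms j unfolding partition_n_def by auto
    then show "indicator (B i) \<omega> = (0::real)" using j by (auto simp: indicator_def)
  qed
  finally show ?thesis using j by simp
qed

locale setting =
  fixes M :: "'a measure" and XX :: "('a \<Rightarrow> real) set" and n :: nat
    and P :: "nat \<Rightarrow> 'a measure set" and L :: "nat \<Rightarrow> real \<Rightarrow> real"
  assumes XX: "rv_space M XX"
    and n: "0 < n"
    and P_ne: "\<forall>i<n. P i \<noteq> {}"
    and P_prob: "\<forall>i<n. \<forall>Q\<in>P i. prob_space Q \<and> sets Q = sets M"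
    and L: "\<forall>i<n. HI (L i)"
    and cont: "\<forall>i<n. continuous_capacity M (upper_prob (P i))"
begin

definition rho where "rho i X = (SUP Q\<in>P i. LVaR M (L i) (measure Q) X)"
abbreviation AS where "AS x \<equiv> A_set M n L (\<lambda>i. upper_prob (P i)) x"

lemma XX_meas: "X \<in> XX \<Longrightarrow> X \<in> borel_measurable M"
  using XX unfolding rv_space_def by auto

lemma L_mono: "i < n \<Longrightarrow> a \<le> b \<Longrightarrow> L i a \<le> L i b"
  using L unfolding HI_def mono_def by auto

lemma L_pos: "i < n \<Longrightarrow> 0 < L i a"
  using L unfolding HI_def by auto

lemma cap: "i < n \<Longrightarrow> capacity M (upper_prob (P i))"
  using cont unfolding continuous_capacity_def by auto

lemma up_mono: "i < n \<Longrightarrow> A \<in> sets M \<Longrightarrow> B \<in> sets M \<Longrightarrow> A \<subseteq> B \<Longrightarrow> upper_prob (P i) A \<le> upper_prob (P i) B"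
  using cap unfolding capacity_def by blast

lemma up_empty: "i < n \<Longrightarrow> upper_prob (P i) {} = 0"
  using cap unfolding capacity_def by blast

lemma up_ge: "i < n \<Longrightarrow> Q \<in> P i \<Longrightarrow> measure Q A \<le> upper_prob (P i) A"
  unfolding upper_prob_def
proof (rule cSUP_upper)
  assume "i < n" "Q \<in> P i"
  show "bdd_above ((\<lambda>Q. measure Q A) ` P i)"
  proof (rule bdd_aboveI2[where M=1])
    fix Q' assume "Q' \<in> P i"
    then have "prob_space Q'" using P_prob \<open>i < n\<close> by auto
    then show "measure Q' A \<le> 1" by (rule prob_space.prob_le_1)
  qed
qed

lemma up_least: "i < n \<Longrightarrow> (\<And>Q. Q \<in> P i \<Longrightarrow> measure Q A \<le> c) \<Longrightarrow> upper_prob (P i) A \<le> c"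
  unfolding upper_prob_def using P_ne by (intro cSUP_least) auto

lemma rho_le:
  assumes "i < n" "upper_prob (P i) {\<omega>\<in>space M. y < Z \<omega>} \<le> L i y"
  shows "rho i Z \<le> ereal y"
  unfolding rho_def LVaR_def
proof (rule SUP_least)
  fix Q assume Q: "Q \<in> P i"
  have "ereal y \<in> {ereal x |x. measure Q {\<omega> \<in> space M. x < Z \<omega>} \<le> L i x}"
    using up_ge[OF assms(1) Q, of "{\<omega>\<in>space M. y < Z \<omega>}"] assms(2) by auto
  then show "Inf {ereal x |x. measure Q {\<omega> \<in> space M. x < Z \<omega>} \<le> L i x} \<le> ereal y"
    by (rule Inf_lower)
qed

lemma rho_lt:
  assumes "i < n" "Z \<in> borel_measurable M" "rho i Z < ereal c"
  shows "upper_prob (P i) {\<omega>\<in>space M. c < Z \<omega>} \<le> L i c"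
proof (rule up_least[OF assms(1)])
  fix Q assume Q: "Q \<in> P i"
  interpret Q: prob_space Q using P_prob assms(1) Q by auto
  have sQ: "sets Q = sets M" using P_prob assms(1) Q by auto
  have "LVaR M (L i) (measure Q) Z < ereal c"
    using assms(3) Q unfolding rho_def by (rule SUP_lessD)
  then obtain x where x: "measure Q {\<omega> \<in> space M. x < Z \<omega>} \<le> L i x" "ereal x < ereal c"
    unfolding LVaR_def Inf_less_iff by auto
  have "measure Q {\<omega>\<in>space M. c < Z \<omega>} \<le> measure Q {\<omega> \<in> space M. x < Z \<omega>}"
    using x(2) meas_gt[OF assms(2)] sQ by (intro Q.finite_measure_mono) auto
  also have "\<dots> \<le> L i x" by (rule x(1))
  also have "\<dots> \<le> L i c" using x(2) L_mono[OF assms(1)] by auto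
  finally show "measure Q {\<omega>\<in>space M. c < Z \<omega>} \<le> L i c" .
qed

lemma AS_mono:
  assumes "A \<in> AS x" "x \<le> x'"
  shows "A \<in> AS x'"
proof -
  from assms obtain B y where B: "A = (\<Union>i<n. B i)" "\<forall>i<n. B i \<in> sets M"
    "(\<Sum>i<n. y i) = x" "\<forall>i<n. upper_prob (P i) (B i) \<le> L i (y i)"
    unfolding A_set_def by blast
  define y' where "y' = y(0 := y 0 + (x' - x))"
  have "(\<Sum>i<n. y' i) = y' 0 + (\<Sum>i\<in>{..<n}-{0}. y' i)"
    using n by (subst sum.remove[of _ 0]) auto
  also have "(\<Sum>i\<in>{..<n}-{0}. y' i) = (\<Sum>i\<in>{..<n}-{0}. y i)"
    unfolding y'_def by (rule sum.cong) auto
  also have "(\<Sum>i\<in>{..<n}-{0}. y i) = (\<Sum>i<n. y i) - y 0"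
    using n by (subst sum.remove[of _ 0]) auto
  finally have "(\<Sum>i<n. y' i) = x'" using B(3) unfolding y'_def by simp
  moreover have "\<forall>i<n. upper_prob (P i) (B i) \<le> L i (y' i)"
  proof safe
    fix i assume "i < n"
    have "y i \<le> y' i" unfolding y'_def using assms(2) by auto
    then show "upper_prob (P i) (B i) \<le> L i (y' i)"
      using B(4) L_mono[OF \<open>i<n\<close>] \<open>i<n\<close> by (meson order_trans)
  qed
  ultimately show ?thesis unfolding A_set_def using B(1,2) by blast
qed

lemma AS_down:
  assumes "A \<in> AS x" "C \<in> sets M" "C \<subseteq> A"
  shows "C \<in> AS x"
proof -
  from assms obtain B y where B: "A = (\<Union>i<n. B i)" "\<forall>i<n. B i \<in> sets M"
    "(\<Sum>i<n. y i) = x" "\<forall>i<n. upper_prob (P i) (B i) \<le> L i (y i)"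
    unfolding A_set_def by blast
  have "C = (\<Union>i<n. B i \<inter> C)" using B(1) assms(3) by auto
  moreover have "\<forall>i<n. B i \<inter> C \<in> sets M" using B(2) assms(2) by auto
  moreover have "\<forall>i<n. upper_prob (P i) (B i \<inter> C) \<le> L i (y i)"
    using B(2,4) assms(2) up_mono by (meson Int_lower1 order_trans sets.Int)
  ultimately show ?thesis unfolding A_set_def using B(3) by blast
qed

lemma AS_empty: "{} \<in> AS x"
proof -
  define y where "y = (\<lambda>i::nat. x / real n)"
  have "(\<Sum>i<n. y i) = x" unfolding y_def using n by simp
  moreover have "\<forall>i<n. upper_prob (P i) {} \<le> L i (y i)"
    using up_empty L_pos by (simp add: less_imp_le)
  moreover have "{} = (\<Union>i<n. (\<lambda>i. {}) i)" by simp
  ultimately show ?thesis unfolding A_set_def by blast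
qed


lemma partition_ex:
  assumes X: "X \<in> borel_measurable M" and E: "{\<omega>\<in>space M. x < X \<omega>} \<in> AS x"
  shows "\<exists>y B. (\<Sum>i<n. y i) = x \<and> partition_n M n B \<and>
    (\<forall>i<n. upper_prob (P i) ({\<omega>\<in>space M. x < X \<omega>} \<inter> B i) \<le> L i (y i))"
proof -
  define E where "E = {\<omega>\<in>space M. x < X \<omega>}"
  have Em: "E \<in> sets M" unfolding E_def using meas_gt[OF X] .
  have Es: "E \<subseteq> space M" unfolding E_def by auto
  from E obtain A y where A: "E = (\<Union>i<n. A i)" "\<forall>i<n. A i \<in> sets M"
    "(\<Sum>i<n. y i) = x" "\<forall>i<n. upper_prob (P i) (A i) \<le> L i (y i)"
    unfolding A_set_def E_def by blast
  define B where "B i = disjointed A i \<union> (if i = 0 then space M - E else {})" for i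
  have dA: "disjointed A i \<in> sets M" if "i < n" for i
  proof -
    have "(\<Union>j\<in>{0..<i}. A j) \<in> sets M" using A(2) that by (intro sets.finite_UN) auto
    then show ?thesis unfolding disjointed_def using A(2) that by auto
  qed
  have dE: "disjointed A i \<subseteq> E" if "i < n" for i
    using disjointed_subset[of A i] A(1) that by auto
  have Bm: "\<forall>i<n. B i \<in> sets M"
  proof safe
    fix i assume i: "i < n"
    have "space M - E \<in> sets M" using Em by auto
    then show "B i \<in> sets M" unfolding B_def using dA[OF i] by auto
  qed
  have Bd: "\<forall>i<n. \<forall>j<n. i \<noteq> j \<longrightarrow> B i \<inter> B j = {}"
  proof (intro allI impI)
    fix i j assume ij: "i < n" "j < n" "i \<noteq> j"
    have "disjointed A i \<inter> disjointed A j = {}"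
      using disjoint_family_disjointed[of A] ij unfolding disjoint_family_on_def by auto
    then show "B i \<inter> B j = {}" unfolding B_def using dE ij by auto
  qed
  have "(\<Union>i<n. disjointed A i) = E"
    using finite_UN_disjointed_eq[of A n] A(1) by (simp add: atLeast0LessThan)
  then have Bu: "(\<Union>i<n. B i) = space M"
  proof -
    assume U: "(\<Union>i<n. disjointed A i) = E"
    have "(\<Union>i<n. B i) = (\<Union>i<n. disjointed A i) \<union> (\<Union>i<n. (if i = 0 then space M - E else {}))"
      unfolding B_def by (rule UN_Un_distrib)
    also have "(\<Union>i<n. (if i = 0 then space M - E else {})) = space M - E"
      using n by (auto split: if_splits)
    finally show ?thesis using U Es by auto
  qed
  have "\<forall>i<n. upper_prob (P i) (E \<inter> B i) \<le> L i (y i)"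
  proof safe
    fix i assume i: "i < n"
    have "E \<inter> B i \<subseteq> A i" unfolding B_def using disjointed_subset[of A i] by auto
    then have "upper_prob (P i) (E \<inter> B i) \<le> upper_prob (P i) (A i)"
      using up_mono[OF i] Em Bm A(2) i by auto
    then show "upper_prob (P i) (E \<inter> B i) \<le> L i (y i)" using A(4) i by auto
  qed
  then show ?thesis using A(3) Bm Bd Bu unfolding partition_n_def E_def by blast
qed

lemma alloc:
  assumes X: "X \<in> XX" and y: "(\<Sum>i<n. y i) = x" and B: "partition_n M n B"
    and up: "\<forall>i<n. upper_prob (P i) ({\<omega>\<in>space M. x < X \<omega>} \<inter> B i) \<le> L i (y i)"
  shows "\<forall>i<n. (\<lambda>\<omega>. (X \<omega> - x) * indicator (B i) \<omega> + y i) \<in> XX"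
    and "\<forall>\<omega>\<in>space M. (\<Sum>i<n. (X \<omega> - x) * indicator (B i) \<omega> + y i) = X \<omega>"
    and "\<forall>i<n. rho i (\<lambda>\<omega>. (X \<omega> - x) * indicator (B i) \<omega> + y i) \<le> ereal (y i)"
proof -
  have c: "\<And>c. (\<lambda>_. c) \<in> XX" using XX unfolding rv_space_def by blast
  have pm: "\<And>U V. U \<in> XX \<Longrightarrow> V \<in> XX \<Longrightarrow> (\<lambda>\<omega>. U \<omega> + V \<omega>) \<in> XX \<and> (\<lambda>\<omega>. U \<omega> - V \<omega>) \<in> XX"
    using XX unfolding rv_space_def by blast
  have ind: "\<And>U A. U \<in> XX \<Longrightarrow> A \<in> sets M \<Longrightarrow> (\<lambda>\<omega>. U \<omega> * indicator A \<omega>) \<in> XX"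
    using XX unfolding rv_space_def by blast
  show "\<forall>i<n. (\<lambda>\<omega>. (X \<omega> - x) * indicator (B i) \<omega> + y i) \<in> XX"
  proof safe
    fix i assume i: "i < n"
    have "(\<lambda>\<omega>. X \<omega> - x) \<in> XX" using pm[OF X c[of x]] by simp
    then have "(\<lambda>\<omega>. (X \<omega> - x) * indicator (B i) \<omega>) \<in> XX"
      using ind[of "\<lambda>\<omega>. X \<omega> - x" "B i"] B i unfolding partition_n_def by simp
    then show "(\<lambda>\<omega>. (X \<omega> - x) * indicator (B i) \<omega> + y i) \<in> XX"
      using pm[OF _ c[of "y i"]] by simp
  qed
  show "\<forall>\<omega>\<in>space M. (\<Sum>i<n. (X \<omega> - x) * indicator (B i) \<omega> + y i) = X \<omega>"
  proof
    fix \<omega> assume "\<omega> \<in> space M"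
    then have "(\<Sum>i<n. indicator (B i) \<omega> :: real) = 1" using part_ind[OF B] by blast
    then show "(\<Sum>i<n. (X \<omega> - x) * indicator (B i) \<omega> + y i) = X \<omega>"
      using y by (simp add: sum.distrib sum_distrib_left[symmetric])
  qed
  show "\<forall>i<n. rho i (\<lambda>\<omega>. (X \<omega> - x) * indicator (B i) \<omega> + y i) \<le> ereal (y i)"
  proof safe
    fix i assume i: "i < n"
    have "{\<omega>\<in>space M. y i < (X \<omega> - x) * indicator (B i) \<omega> + y i} = {\<omega>\<in>space M. x < X \<omega>} \<inter> B i"
      by (auto simp: indicator_def)
    then show "rho i (\<lambda>\<omega>. (X \<omega> - x) * indicator (B i) \<omega> + y i) \<le> ereal (y i)"
      using rho_le[OF i] up i by simp
  qed
qed

lemma conv_le: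
  assumes X: "X \<in> XX" and E: "{\<omega>\<in>space M. x < X \<omega>} \<in> AS x"
  shows "inf_conv M XX n rho X \<le> ereal x"
proof -
  obtain y B where yB: "(\<Sum>i<n. y i) = x" "partition_n M n B"
    "\<forall>i<n. upper_prob (P i) ({\<omega>\<in>space M. x < X \<omega>} \<inter> B i) \<le> L i (y i)"
    using partition_ex[OF XX_meas[OF X] E] by blast
  define Xs where "Xs = (\<lambda>i \<omega>. (X \<omega> - x) * indicator (B i) \<omega> + y i)"
  note a = alloc[OF X yB, folded Xs_def]
  have "inf_conv M XX n rho X \<le> (\<Sum>i<n. rho i (Xs i))"
    unfolding inf_conv_def using a(1,2) by (intro Inf_lower) (auto simp: Xs_def)
  also have "\<dots> \<le> (\<Sum>i<n. ereal (y i))" using a(3) by (intro sum_mono) (auto simp: Xs_def)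
  also have "\<dots> = ereal x" using yB(1) by (simp add: sum_ereal)
  finally show ?thesis .
qed

definition RR where "RR X = Inf {ereal x | x. {\<omega>\<in>space M. X \<omega> > x} \<in> AS x}"

lemma part1: assumes X: "X \<in> XX" shows "inf_conv M XX n rho X = RR X"
proof (rule antisym)
  show "inf_conv M XX n rho X \<le> RR X"
    unfolding RR_def by (rule Inf_greatest) (auto intro: conv_le[OF X])
  show "RR X \<le> inf_conv M XX n rho X"
    unfolding inf_conv_def
  proof (rule Inf_greatest, clarify)
    fix Xs assume Xs: "\<forall>i<n. Xs i \<in> XX" "\<forall>\<omega>\<in>space M. (\<Sum>i<n. Xs i \<omega>) = X \<omega>"
    show "RR X \<le> (\<Sum>i<n. rho i (Xs i))"
    proof (rule ccontr)
      assume "\<not> ?thesis"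
      then have "(\<Sum>i<n. rho i (Xs i)) < RR X" by simp
      then obtain b where b: "(\<Sum>i<n. rho i (Xs i)) < ereal b" "ereal b < RR X"
        using ereal_dense2 by blast
      have "\<forall>i\<in>{..<n}. rho i (Xs i) < \<infinity>"
      proof
        fix i assume "i \<in> {..<n}"
        show "rho i (Xs i) < \<infinity>"
        proof (rule ccontr)
          assume "\<not> rho i (Xs i) < \<infinity>"
          then have "rho i (Xs i) = \<infinity>" by simp
          then have "(\<Sum>i<n. rho i (Xs i)) = \<infinity>" using \<open>i \<in> {..<n}\<close> by (auto simp: sum_Pinfty)
          then show False using b(1) by simp
        qed
      qed
      from ereal_sum_split[OF _ this b(1)] obtain c where
        c: "\<forall>i\<in>{..<n}. rho i (Xs i) < ereal (c i)" "(\<Sum>i<n. c i) < b" by auto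
      define s where "s = (\<Sum>i<n. c i)"
      define E where "E = {\<omega>\<in>space M. s < X \<omega>}"
      define A where "A i = {\<omega>\<in>space M. c i < Xs i \<omega>} \<inter> E" for i
      have Em: "E \<in> sets M" unfolding E_def using meas_gt[OF XX_meas[OF X]] .
      have Am: "\<forall>i<n. A i \<in> sets M" unfolding A_def using meas_gt[OF XX_meas] Xs(1) Em by auto
      have "E = (\<Union>i<n. A i)"
      proof
        show "(\<Union>i<n. A i) \<subseteq> E" unfolding A_def by auto
        show "E \<subseteq> (\<Union>i<n. A i)"
        proof
          fix \<omega> assume w: "\<omega> \<in> E"
          show "\<omega> \<in> (\<Union>i<n. A i)"
          proof (rule ccontr)
            assume "\<omega> \<notin> (\<Union>i<n. A i)"
            then have "\<forall>i<n. Xs i \<omega> \<le> c i" using w unfolding A_def E_def by (fastforce simp: not_less)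
            then have "(\<Sum>i<n. Xs i \<omega>) \<le> s" unfolding s_def by (intro sum_mono) auto
            then show False using w Xs(2) unfolding E_def by auto
          qed
        qed
      qed
      moreover have "\<forall>i<n. upper_prob (P i) (A i) \<le> L i (c i)"
      proof safe
        fix i assume i: "i < n"
        have "upper_prob (P i) (A i) \<le> upper_prob (P i) {\<omega>\<in>space M. c i < Xs i \<omega>}"
          using up_mono[OF i] Am meas_gt[OF XX_meas] Xs(1) i unfolding A_def by auto
        also have "\<dots> \<le> L i (c i)" using rho_lt[OF i XX_meas] Xs(1) c(1) i by auto
        finally show "upper_prob (P i) (A i) \<le> L i (c i)" .
      qed
      ultimately have "E \<in> AS s" unfolding A_set_def s_def using Am by blast
      then have "RR X \<le> ereal s" unfolding RR_def E_def by (intro Inf_lower) auto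
      moreover have "ereal s < ereal b" using c(2) unfolding s_def by simp
      ultimately have "RR X < ereal b" by (rule le_less_trans)
      then show False using b(2) by simp
    qed
  qed
qed


definition tt where "tt A = Inf {ereal x | x. A \<in> AS x}"
definition gg :: "real \<Rightarrow> real" where "gg r = 1/2 + arctan r / pi"
definition GG :: "ereal \<Rightarrow> real" where
  "GG e = (case e of ereal r \<Rightarrow> gg r | PInfty \<Rightarrow> 1 | MInfty \<Rightarrow> 0)"
definition ww where "ww A = (if A = space M then 1 else GG (tt A))"
definition LL where "LL x = (if tt (space M) \<le> ereal x then 1 else gg x)"

lemma gg_bounds: "0 < gg r \<and> gg r < 1"
proof -
  have a: "-(pi/2) < arctan r" "arctan r < pi/2" using arctan_bounded by auto
  have "arctan r / pi < 1/2" using a(2) pi_gt_zero by (simp add: divide_simps)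
  moreover have "-(1/2) < arctan r / pi" using a(1) pi_gt_zero by (simp add: divide_simps)
  ultimately show ?thesis unfolding gg_def by linarith
qed

lemma gg_le_iff: "gg a \<le> gg b \<longleftrightarrow> a \<le> b"
  unfolding gg_def using pi_gt_zero by (simp add: divide_le_cancel arctan_le_iff)

lemma GG_mono: "a \<le> b \<Longrightarrow> GG a \<le> GG b"
  using gg_bounds gg_le_iff
  by (cases a; cases b) (auto simp: GG_def less_imp_le)

lemma GG_bounds: "0 \<le> GG e \<and> GG e \<le> 1"
  using gg_bounds by (cases e) (auto simp: GG_def less_imp_le)

lemma GG_le_gg: "GG e \<le> gg x \<longleftrightarrow> e \<le> ereal x"
  using gg_bounds gg_le_iff
  by (cases e) (auto simp: GG_def less_imp_le not_le)

lemma tt_mono: "B \<in> sets M \<Longrightarrow> B \<subseteq> A \<Longrightarrow> tt B \<le> tt A"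
  unfolding tt_def by (rule Inf_superset_mono) (auto intro: AS_down)

lemma tt_empty: "tt {} = -\<infinity>"
  by (rule ereal_bot) (auto simp: tt_def intro!: Inf_lower AS_empty)

lemma tt_le: "A \<in> AS x \<Longrightarrow> tt A \<le> ereal x"
  unfolding tt_def by (rule Inf_lower) blast

lemma tt_lt: "tt A < ereal x \<Longrightarrow> A \<in> AS x"
  unfolding tt_def Inf_less_iff by (auto intro: AS_mono)

lemma space_ne: "space M \<noteq> {}"
proof -
  obtain Q where Q: "Q \<in> P 0" using P_ne n by auto
  then have "prob_space Q" "sets Q = sets M" using P_prob n by auto
  then show ?thesis using prob_space.not_empty sets_eq_imp_space_eq by metis
qed

lemma ww_cap: "capacity M ww"
  unfolding capacity_def
proof (intro conjI ballI impI)
  fix A assume "A \<in> sets M"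
  show "0 \<le> ww A" "ww A \<le> 1" unfolding ww_def using GG_bounds by auto
next
  fix A B assume AB: "A \<in> sets M" "B \<in> sets M" "A \<subseteq> B"
  show "ww A \<le> ww B"
  proof (cases "B = space M")
    case True then show ?thesis unfolding ww_def using GG_bounds by auto
  next
    case False
    then have "A \<noteq> space M" using AB sets.sets_into_space by blast
    then show ?thesis unfolding ww_def using False GG_mono tt_mono AB by auto
  qed
next
  show "ww {} = 0" unfolding ww_def using space_ne tt_empty by (auto simp: GG_def)
  show "ww (space M) = 1" unfolding ww_def by simp
qed

lemma LL_HI: "HI_star LL"
  unfolding HI_star_def
proof
  show "mono LL" unfolding mono_def
  proof (intro allI impI)
    fix a b :: real assume ab: "a \<le> b"
    show "LL a \<le> LL b"
    proof (cases "tt (space M) \<le> ereal b")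
      case True
      then show ?thesis unfolding LL_def using gg_bounds[of a] by auto
    next
      case False
      then have "\<not> tt (space M) \<le> ereal a" using ab by (meson ereal_less_eq(3) order_trans)
      then show ?thesis unfolding LL_def using False ab gg_le_iff by auto
    qed
  qed
  show "\<forall>x. 0 < LL x \<and> LL x \<le> 1" unfolding LL_def using gg_bounds by (auto simp: less_imp_le)
qed

lemma key: assumes "A \<in> sets M" shows "ww A \<le> LL x \<longleftrightarrow> tt A \<le> ereal x"
proof (cases "A = space M")
  case True
  then show ?thesis unfolding ww_def LL_def using gg_bounds[of x] by (auto simp: not_le)
next
  case False
  have tA: "tt A \<le> tt (space M)" using tt_mono assms sets.sets_into_space by blast
  show ?thesis
  proof (cases "tt (space M) \<le> ereal x")
    case True
    then show ?thesis unfolding ww_def LL_def using False GG_bounds tA by auto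
  next
    case F2: False
    then show ?thesis unfolding ww_def LL_def using False GG_le_gg by auto
  qed
qed

lemma part2: assumes X: "X \<in> XX" shows "RR X = LVaR M LL ww X"
proof -
  have m: "\<And>x. {\<omega>\<in>space M. x < X \<omega>} \<in> sets M" using meas_gt[OF XX_meas[OF X]] .
  have "LVaR M LL ww X = Inf {ereal x | x. tt {\<omega>\<in>space M. x < X \<omega>} \<le> ereal x}"
    unfolding LVaR_def
  proof (rule arg_cong[where f=Inf], rule Collect_cong)
    fix y
    show "(\<exists>x. y = ereal x \<and> ww {\<omega>\<in>space M. x < X \<omega>} \<le> LL x) \<longleftrightarrow>
      (\<exists>x. y = ereal x \<and> tt {\<omega>\<in>space M. x < X \<omega>} \<le> ereal x)"
      using key[OF m] by blast
  qed
  also have "\<dots> = RR X"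
  proof (rule antisym)
    show "Inf {ereal x | x. tt {\<omega>\<in>space M. x < X \<omega>} \<le> ereal x} \<le> RR X"
      unfolding RR_def
    proof (rule Inf_superset_mono, clarify)
      fix x assume "{\<omega>\<in>space M. x < X \<omega>} \<in> AS x"
      then have "tt {\<omega>\<in>space M. x < X \<omega>} \<le> ereal x" by (rule tt_le)
      then show "\<exists>x'. ereal x = ereal x' \<and> tt {\<omega>\<in>space M. x' < X \<omega>} \<le> ereal x'"
        by (intro exI[of _ x] conjI refl)
    qed
    show "RR X \<le> Inf {ereal x | x. tt {\<omega>\<in>space M. x < X \<omega>} \<le> ereal x}"
    proof (rule Inf_greatest, clarify)
      fix x assume x: "tt {\<omega>\<in>space M. x < X \<omega>} \<le> ereal x"
      show "RR X \<le> ereal x"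
      proof (rule ccontr)
        assume "\<not> RR X \<le> ereal x"
        then have "ereal x < RR X" by (simp add: not_le)
        then obtain z where z: "ereal x < ereal z" "ereal z < RR X"
          using ereal_dense2 by blast
        have "tt {\<omega>\<in>space M. z < X \<omega>} \<le> tt {\<omega>\<in>space M. x < X \<omega>}"
          by (rule tt_mono[OF m]) (use z(1) in auto)
        then have "tt {\<omega>\<in>space M. z < X \<omega>} < ereal z" by (rule le_less_trans[OF order.trans[OF _ x] z(1)])
        then have "{\<omega>\<in>space M. z < X \<omega>} \<in> AS z" by (rule tt_lt)
        then have "RR X \<le> ereal z" unfolding RR_def
          by (intro Inf_lower CollectI exI[of _ z] conjI refl)
        then show False using z(2) by simp
      qed
    qed
  qed
  finally show ?thesis by simp
qed

end

theorem mainTheorem12: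
  fixes M :: "'a measure" and XX :: "('a \<Rightarrow> real) set" and n :: nat
    and P :: "nat \<Rightarrow> 'a measure set" and L :: "nat \<Rightarrow> real \<Rightarrow> real"
  assumes XX: "rv_space M XX"
    and n: "0 < n"
    and P_ne: "\<forall>i<n. P i \<noteq> {}"
    and P_prob: "\<forall>i<n. \<forall>Q\<in>P i. prob_space Q \<and> sets Q = sets M"
    and L: "\<forall>i<n. HI (L i)"
    and cont: "\<forall>i<n. continuous_capacity M (upper_prob (P i))"
  defines "\<rho> \<equiv> (\<lambda>i X. SUP Q\<in>P i. LVaR M (L i) (measure Q) X)"
    and "R \<equiv> (\<lambda>X. Inf {ereal x | x.
               {\<omega>\<in>space M. X \<omega> > x} \<in> A_set M n L (\<lambda>i. upper_prob (P i)) x})"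
  shows "(\<forall>X\<in>XX. inf_conv M XX n \<rho> X = R X)
    \<and> (\<exists>L' w. HI_star L' \<and> capacity M w \<and> (\<forall>X\<in>XX. R X = LVaR M L' w X))
    \<and> (\<forall>X\<in>XX. \<forall>xs::real.
         {\<omega>\<in>space M. X \<omega> > xs} \<in> A_set M n L (\<lambda>i. upper_prob (P i)) xs \<and> R X = ereal xs \<longrightarrow>
         (\<exists>y A. (\<Sum>i<n. y i) = xs \<and> partition_n M n A \<and>
              (\<forall>i<n. upper_prob (P i) ({\<omega>\<in>space M. X \<omega> > xs} \<inter> A i) \<le> L i (y i)))
       \<and> (\<forall>y A. (\<Sum>i<n. y i) = xs \<and> partition_n M n A \<and>
              (\<forall>i<n. upper_prob (P i) ({\<omega>\<in>space M. X \<omega> > xs} \<inter> A i) \<le> L i (y i)) \<longrightarrow>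
            (let Xs = (\<lambda>i \<omega>. (X \<omega> - xs) * indicator (A i) \<omega> + y i) in
               (\<forall>i<n. Xs i \<in> XX) \<and> (\<forall>\<omega>\<in>space M. (\<Sum>i<n. Xs i \<omega>) = X \<omega>)
               \<and> (\<Sum>i<n. \<rho> i (Xs i)) = inf_conv M XX n \<rho> X)))"
proof -
  interpret S: setting M XX n P L using assms by unfold_locales auto
  have rho_eq: "\<rho> = S.rho" unfolding \<rho>_def by (simp add: S.rho_def fun_eq_iff)
  have R_eq: "R = S.RR" unfolding R_def by (simp add: S.RR_def fun_eq_iff)
  have P1: "\<forall>X\<in>XX. inf_conv M XX n \<rho> X = R X"
    using S.part1 unfolding rho_eq R_eq by blast
  have P2: "\<exists>L' w. HI_star L' \<and> capacity M w \<and> (\<forall>X\<in>XX. R X = LVaR M L' w X)"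
    using S.LL_HI S.ww_cap S.part2 unfolding R_eq by blast
  have P3: "\<forall>X\<in>XX. \<forall>xs::real.
         {\<omega>\<in>space M. X \<omega> > xs} \<in> A_set M n L (\<lambda>i. upper_prob (P i)) xs \<and> R X = ereal xs \<longrightarrow>
         (\<exists>y A. (\<Sum>i<n. y i) = xs \<and> partition_n M n A \<and>
              (\<forall>i<n. upper_prob (P i) ({\<omega>\<in>space M. X \<omega> > xs} \<inter> A i) \<le> L i (y i)))
       \<and> (\<forall>y A. (\<Sum>i<n. y i) = xs \<and> partition_n M n A \<and>
              (\<forall>i<n. upper_prob (P i) ({\<omega>\<in>space M. X \<omega> > xs} \<inter> A i) \<le> L i (y i)) \<longrightarrow>
            (let Xs = (\<lambda>i \<omega>. (X \<omega> - xs) * indicator (A i) \<omega> + y i) in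
               (\<forall>i<n. Xs i \<in> XX) \<and> (\<forall>\<omega>\<in>space M. (\<Sum>i<n. Xs i \<omega>) = X \<omega>)
               \<and> (\<Sum>i<n. \<rho> i (Xs i)) = inf_conv M XX n \<rho> X))"
  proof (intro ballI allI impI conjI)
    fix X xs assume X: "X \<in> XX" and ER: "{\<omega>\<in>space M. X \<omega> > xs} \<in> A_set M n L (\<lambda>i. upper_prob (P i)) xs \<and> R X = ereal xs"
    then have E: "{\<omega>\<in>space M. X \<omega> > xs} \<in> A_set M n L (\<lambda>i. upper_prob (P i)) xs" by blast
    show "\<exists>y A. (\<Sum>i<n. y i) = xs \<and> partition_n M n A \<and>
              (\<forall>i<n. upper_prob (P i) ({\<omega>\<in>space M. X \<omega> > xs} \<inter> A i) \<le> L i (y i))"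
      using S.partition_ex[OF S.XX_meas[OF X] E] .
  next
    fix X xs y A assume X: "X \<in> XX" and ER: "{\<omega>\<in>space M. X \<omega> > xs} \<in> A_set M n L (\<lambda>i. upper_prob (P i)) xs \<and> R X = ereal xs"
      and yA: "(\<Sum>i<n. y i) = xs \<and> partition_n M n A \<and>
              (\<forall>i<n. upper_prob (P i) ({\<omega>\<in>space M. X \<omega> > xs} \<inter> A i) \<le> L i (y i))"
    have RX: "R X = ereal xs" using ER by blast
    define Xs where "Xs = (\<lambda>i \<omega>. (X \<omega> - xs) * indicator (A i) \<omega> + y i)"
    have y: "(\<Sum>i<n. y i) = xs" and B: "partition_n M n A"
      and up: "\<forall>i<n. upper_prob (P i) ({\<omega>\<in>space M. xs < X \<omega>} \<inter> A i) \<le> L i (y i)"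
      using yA by auto
    note a = S.alloc[OF X y B up, folded Xs_def]
    have a1: "\<forall>i<n. Xs i \<in> XX" using a(1) unfolding Xs_def by simp
    have a2: "\<forall>\<omega>\<in>space M. (\<Sum>i<n. Xs i \<omega>) = X \<omega>" using a(2) unfolding Xs_def by simp
    have a3: "\<forall>i<n. \<rho> i (Xs i) \<le> ereal (y i)" using a(3) unfolding Xs_def rho_eq by simp
    have "(\<Sum>i<n. \<rho> i (Xs i)) = inf_conv M XX n \<rho> X"
    proof (rule antisym)
      have "(\<Sum>i<n. \<rho> i (Xs i)) \<le> (\<Sum>i<n. ereal (y i))" using a3 by (intro sum_mono) auto
      also have "\<dots> = ereal xs" using y by (simp add: sum_ereal)
      also have "\<dots> = inf_conv M XX n \<rho> X" using P1 X RX by simp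
      finally show "(\<Sum>i<n. \<rho> i (Xs i)) \<le> inf_conv M XX n \<rho> X" .
      show "inf_conv M XX n \<rho> X \<le> (\<Sum>i<n. \<rho> i (Xs i))"
        unfolding inf_conv_def using a1 a2 by (intro Inf_lower) blast
    qed
    then show "let Xs = (\<lambda>i \<omega>. (X \<omega> - xs) * indicator (A i) \<omega> + y i) in
               (\<forall>i<n. Xs i \<in> XX) \<and> (\<forall>\<omega>\<in>space M. (\<Sum>i<n. Xs i \<omega>) = X \<omega>)
               \<and> (\<Sum>i<n. \<rho> i (Xs i)) = inf_conv M XX n \<rho> X"
      unfolding Let_def Xs_def[symmetric] using a1 a2 by blast
  qed
  show ?thesis using P1 P2 P3 by blast
qed

end
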